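(* Suppose $m=0$ (purely deterministic problem) and, for $\mathfrak{g}\in\{\mathfrak{h},\mathfrak{r},\mathfrak{d}\}$, let $\mathcal{G}(q)=\max\{\mathfrak{g}(\tau):\tau\in T,\ \rho(\tau)\le q\}$. Then for every integer $q\ge1$: $\mathcal{G}(q)=q$ for $\mathfrak{g}=\mathfrak{h}$ (simple iterations); $\mathcal{G}(q)=\lfloor\frac{q+1}{2}\rfloor$ for $\mathfrak{g}=\mathfrak{r}$ (modified Newton iterations); $\mathcal{G}(q)=\lfloor\log_2(q+1)\rfloor$ for $\mathfrak{g}=\mathfrak{d}$ (full Newton iterations).
   Context: With $m=0$, $T$ is the set of rooted trees (all vertices of the single color $0$): the empty tree $\emptyset$ and all $\tau=[\tau_1,\dots,\tau_\kappa]_0$, $\kappa\ge0$, $\tau_j\in T\setminus\{\emptyset\}$ unordered (new root joined to roots of the $\tau_j$; $\bullet_0$ if $\kappa=0$). Order: $\rho(\emptyset)=0$, $\rho([\tau_1,\dots,\tau_\kappa]_0)=1+\sum_j\rho(\tau_j)$ (number of vertices). Maxima over empty sets are $0$. $\mathfrak{h}(\emptyset)=0$, $\mathfrak{h}(\bullet_0)=1$, $\mathfrak{h}([\tau_1,\dots,\tau_\kappa]_0)=1+\max_j\mathfrak{h}(\tau_j)$; $\mathfrak{r}(\emptyset)=0$, $\mathfrak{r}(\bullet_0)=1$, $\mathfrak{r}([\tau_1]_0)=\mathfrak{r}(\tau_1)$, $\mathfrak{r}([\tau_1,\dots,\tau_\kappa]_0)=1+\max_j\mathfrak{r}(\tau_j)$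 for $\kappa\ge2$; $\mathfrak{d}(\emptyset)=0$, $\mathfrak{d}(\bullet_0)=1$, $\mathfrak{d}([\tau_1,\dots,\tau_\kappa]_0)=M$ if exactly one $i$ has $\mathfrak{d}(\tau_i)=M:=\max_j\mathfrak{d}(\tau_j)$, and $M+1$ if at least two indices attain $M$. *)

theory Defs
  imports Complex_Main "HOL-Library.Multiset"
begin

text \<open>Nonempty rooted trees with unordered children (single colour 0):
  a node with a multiset of (nonempty) subtrees. The set T of the paper
  (including the empty tree) is rendered as rtree option, None = empty tree.\<close>
datatype rtree = Node "rtree multiset"

primrec rho_t :: "rtree \<Rightarrow> nat" where
  "rho_t (Node ts) = 1 + sum_mset (image_mset rho_t ts)"

primrec h_t :: "rtree \<Rightarrow> nat" where
  "h_t (Node ts) = 1 + Max (insert 0 (set_mset (image_mset h_t ts)))"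

primrec r_t :: "rtree \<Rightarrow> nat" where
  "r_t (Node ts) =
     (if size ts = 0 then 1
      else if size ts = 1 then the_elem (set_mset (image_mset r_t ts))
      else 1 + Max (set_mset (image_mset r_t ts)))"

primrec d_t :: "rtree \<Rightarrow> nat" where
  "d_t (Node ts) =
     (if size ts = 0 then 1
      else (let ds = image_mset d_t ts; M = Max (set_mset ds)
            in if count ds M \<ge> 2 then M + 1 else M))"

definition lift_T :: "(rtree \<Rightarrow> nat) \<Rightarrow> rtree option \<Rightarrow> nat" where
  "lift_T f t = (case t of None \<Rightarrow> 0 | Some s \<Rightarrow> f s)"

definition rho :: "rtree option \<Rightarrow> nat" where "rho = lift_T rho_t"
definition hgt :: "rtree option \<Rightarrow> nat" where "hgt = lift_T h_t"
definition rfun :: "rtree option \<Rightarrow> nat" where "rfun = lift_T r_t"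
definition dfun :: "rtree option \<Rightarrow> nat" where "dfun = lift_T d_t"

definition GG :: "(rtree option \<Rightarrow> nat) \<Rightarrow> nat \<Rightarrow> nat" where
  "GG g q = Max {g t | t. rho t \<le> q}"

end

theory Submission
  imports Defs
begin

lemma rho_pos: "rho_t t \<ge> 1"
  by (cases t) simp

lemma mem_le_sum: "x \<in># ts \<Longrightarrow> (f x::nat) \<le> sum_mset (image_mset f ts)"
  by (metis multi_member_split image_mset_add_mset sum_mset.add_mset le_add1)

lemma count_two:
  "count (image_mset f ts) y \<ge> 2 \<Longrightarrow> \<exists>a b R. ts = add_mset a (add_mset b R) \<and> f a = y \<and> f b = y"
proof (induction ts)
  case empty then show ?case by simp
next
  case (add x ts)
  show ?case
  proof (cases "f x = y")
    case True
    then have "count (image_mset f ts) y \<ge> 1" using add.prems by simp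
    then have "y \<in># image_mset f ts" by (simp add: Suc_le_eq)
    then obtain b where "b \<in># ts" "f b = y" by auto
    then obtain R where "ts = add_mset b R" by (metis multi_member_split)
    then show ?thesis using True \<open>f b = y\<close> by blast
  next
    case False
    then have "count (image_mset f ts) y \<ge> 2" using add.prems by simp
    then obtain a b R where "ts = add_mset a (add_mset b R)" "f a = y" "f b = y"
      using add.IH by blast
    then show ?thesis
      by (metis add_mset_commute)
  qed
qed

lemma h_bound: "h_t t \<le> rho_t t"
proof (induction t)
  case (Node ts)
  have "Max (insert 0 (set_mset (image_mset h_t ts))) \<le> sum_mset (image_mset rho_t ts)"
  proof (rule Max.boundedI)
    fix a assume "a \<in> insert 0 (set_mset (image_mset h_t ts))"
    then show "a \<le> sum_mset (image_mset rho_t ts)"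
    proof
      assume "a \<in> set_mset (image_mset h_t ts)"
      then obtain x where x: "x \<in># ts" "a = h_t x" by auto
      then have "a \<le> rho_t x" using Node by auto
      also have "\<dots> \<le> sum_mset (image_mset rho_t ts)" using mem_le_sum[OF x(1)] .
      finally show ?thesis .
    qed simp
  qed auto
  then show ?case by simp
qed

lemma r_bound: "2 * r_t t \<le> rho_t t + 1"
proof (induction t)
  case (Node ts)
  consider "size ts = 0" | "size ts = 1" | "size ts \<ge> 2" by linarith
  then show ?case
  proof cases
    case 1 then show ?thesis by simp
  next
    case 2
    then obtain a where a: "ts = {#a#}" by (metis size_1_singleton_mset)
    then show ?thesis using Node[of a] by simp
  next
    case 3
    then have ne: "ts \<noteq> {#}" by auto
    have "Max (set_mset (image_mset r_t ts)) \<in> set_mset (image_mset r_t ts)"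
      by (rule Max_in) (use ne in auto)
    then obtain a where a: "a \<in># ts" "Max (set_mset (image_mset r_t ts)) = r_t a" by auto
    then obtain R where R: "ts = add_mset a R" by (metis multi_member_split)
    then have "size R \<ge> 1" using 3 by simp
    then have "R \<noteq> {#}" by auto
    then obtain b where "b \<in># R" by blast
    then have "rho_t b \<le> sum_mset (image_mset rho_t R)" by (rule mem_le_sum)
    with rho_pos[of b] have "1 \<le> sum_mset (image_mset rho_t R)" by linarith
    moreover have "2 * r_t a \<le> rho_t a + 1" using Node a by auto
    ultimately have "2 * (1 + r_t a) \<le> 1 + sum_mset (image_mset rho_t ts) + 1"
      using R by simp
    moreover have "r_t (Node ts) = 1 + r_t a" using 3 a ne by simp
    ultimately show ?thesis by simp
  qed
qed

lemma d_bound: "2 ^ d_t t \<le> rho_t t + 1"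
proof (induction t)
  case (Node ts)
  show ?case
  proof (cases "size ts = 0")
    case True then show ?thesis by simp
  next
    case False
    then have ne: "ts \<noteq> {#}" by auto
    define M where "M = Max (set_mset (image_mset d_t ts))"
    have dv: "d_t (Node ts) = (if count (image_mset d_t ts) M \<ge> 2 then M+1 else M)"
      using False unfolding M_def by (simp add: Let_def)
    have "M \<in> set_mset (image_mset d_t ts)"
      unfolding M_def by (rule Max_in) (use ne in auto)
    then obtain a where a: "a \<in># ts" "d_t a = M" by auto
    show ?thesis
    proof (cases "count (image_mset d_t ts) M \<ge> 2")
      case True
      obtain x y R where xy: "ts = add_mset x (add_mset y R)" "d_t x = M" "d_t y = M"
        using count_two[OF True] by blast
      have "x \<in># ts" "y \<in># ts" using xy(1) by auto
      then have "2 ^ d_t x \<le> rho_t x + 1" "2 ^ d_t y \<le> rho_t y + 1" using Node by auto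
      then have "2 ^ M \<le> rho_t x + 1" "2 ^ M \<le> rho_t y + 1" using xy(2,3) by auto
      moreover have "rho_t (Node ts) = 1 + rho_t x + rho_t y + sum_mset (image_mset rho_t R)"
        using xy(1) by simp
      ultimately have "2 ^ (M+1) \<le> rho_t (Node ts) + 1" by simp
      then show ?thesis using dv True by simp
    next
      case c: False
      have "2 ^ d_t a \<le> rho_t a + 1" using Node a by auto
      moreover have "rho_t a \<le> sum_mset (image_mset rho_t ts)" using a(1) by (rule mem_le_sum)
      ultimately have "2 ^ M \<le> rho_t (Node ts) + 1" using a(2) by simp
      then show ?thesis using dv c by simp
    qed
  qed
qed

primrec P :: "nat \<Rightarrow> rtree" where
  "P 0 = Node {#}" | "P (Suc n) = Node {#P n#}"
primrec C :: "nat \<Rightarrow> rtree" where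
  "C 0 = Node {#}" | "C (Suc n) = Node {#C n, Node {#}#}"
primrec B :: "nat \<Rightarrow> rtree" where
  "B 0 = Node {#}" | "B (Suc n) = Node {#B n, B n#}"

lemma P_props: "rho_t (P n) = n + 1 \<and> h_t (P n) = n + 1"
  by (induction n) auto

lemma C_props: "rho_t (C n) = 2 * n + 1 \<and> r_t (C n) = n + 1"
  by (induction n) (auto simp: max_def)

lemma B_props: "rho_t (B n) + 1 = 2 ^ (n + 1) \<and> d_t (B n) = n + 1"
  by (induction n) (auto simp: Let_def)

lemma GG_eq:
  assumes bound: "\<And>t. g t \<le> f (rho t)" and mono: "mono f"
    and w: "rho w \<le> q" "\<And>t. rho t \<le> q \<Longrightarrow> g t \<le> g w"
  shows "GG g q = g w"
proof -
  let ?S = "{g t | t. rho t \<le> q}"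
  have "?S \<subseteq> {..f q}" using bound mono by (auto simp: mono_def intro: order_trans)
  then have "finite ?S" using finite_subset by blast
  then show ?thesis unfolding GG_def
    by (rule Max_eqI) (use w in auto)
qed

theorem mainTheorem12:
  fixes q :: nat
  assumes "q \<ge> 1"
  shows "GG hgt q = q \<and> GG rfun q = (q + 1) div 2
         \<and> int (GG dfun q) = \<lfloor>log 2 (real q + 1)\<rfloor>"
proof (intro conjI)
  have hb: "hgt t \<le> rho t" for t
    by (cases t) (auto simp: hgt_def rho_def lift_T_def h_bound)
  have "GG hgt q = hgt (Some (P (q - 1)))"
  proof (rule GG_eq[where f="\<lambda>x. x"])
    show "mono (\<lambda>x::nat. x)" by (auto simp: mono_def)
    show "rho (Some (P (q - 1))) \<le> q" using assms P_props[of "q-1"] by (simp add: rho_def lift_T_def)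
    fix t assume "rho t \<le> q"
    then show "hgt t \<le> hgt (Some (P (q - 1)))"
      using hb[of t] assms P_props[of "q-1"] by (simp add: hgt_def lift_T_def)
  qed (rule hb)
  then show "GG hgt q = q" using assms P_props[of "q-1"] by (simp add: hgt_def lift_T_def)
next
  have rb: "rfun t \<le> (rho t + 1) div 2" for t
  proof (cases t)
    case (Some a)
    have "2 * r_t a \<le> rho_t a + 1" by (rule r_bound)
    then have "r_t a \<le> (rho_t a + 1) div 2" by presburger
    then show ?thesis using Some by (simp add: rfun_def rho_def lift_T_def)
  qed (simp add: rfun_def rho_def lift_T_def)
  have rb2: "rho t \<le> q \<Longrightarrow> rfun t \<le> (q+1) div 2" for t
    using rb[of t] by (meson add_le_mono1 div_le_mono order_trans)
  have "GG rfun q = rfun (Some (C ((q+1) div 2 - 1)))"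
  proof (rule GG_eq[where f="\<lambda>x. (x+1) div 2"])
    show "mono (\<lambda>x::nat. (x + 1) div 2)" by (auto simp: mono_def div_le_mono)
    show "rho (Some (C ((q + 1) div 2 - 1))) \<le> q"
      using assms C_props by (simp add: rho_def lift_T_def)
    fix t assume "rho t \<le> q"
    then show "rfun t \<le> rfun (Some (C ((q + 1) div 2 - 1)))"
      using rb2 assms C_props by (simp add: rfun_def lift_T_def)
  qed (rule rb)
  then show "GG rfun q = (q + 1) div 2" using assms C_props by (simp add: rfun_def lift_T_def)
next
  have db: "2 ^ dfun t \<le> rho t + 1" for t
    using d_bound by (cases t) (auto simp: dfun_def rho_def lift_T_def)
  have ex: "\<exists>k. 2 ^ k \<le> q + 1 \<and> q + 1 < 2 ^ (k+1)"
  proof -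
    have "q + 1 < 2 ^ ((q+1)+1)" using less_exp[of "q+1"] by simp
    then have "\<exists>k. q + 1 < 2 ^ (k+1)" by blast
    then obtain k where "q + 1 < 2 ^ (k+1)" "\<forall>j<k. \<not> q + 1 < 2 ^ (j+1)"
      using exists_least_iff[of "\<lambda>k. q + 1 < 2 ^ (k+1)"] by blast
    then show ?thesis
    proof (cases k)
      case 0 then show ?thesis using \<open>q + 1 < 2 ^ (k+1)\<close> assms by simp
    next
      case (Suc j)
      then have "\<not> q + 1 < 2 ^ (j+1)" using \<open>\<forall>j<k. \<not> q + 1 < 2 ^ (j+1)\<close> by simp
      then show ?thesis using \<open>q + 1 < 2 ^ (k+1)\<close> Suc by (intro exI[of _ k]) simp
    qed
  qed
  then obtain k where k: "2 ^ k \<le> q + 1" "q + 1 < 2 ^ (k+1)" by blast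
  have k1: "k \<ge> 1" using k assms by (cases k) auto
  have db2: "rho t \<le> q \<Longrightarrow> dfun t \<le> k" for t
  proof (rule ccontr)
    assume "rho t \<le> q" "\<not> dfun t \<le> k"
    then have "2 ^ (k+1) \<le> (2::nat) ^ dfun t" by (intro power_increasing) auto
    with db[of t] \<open>rho t \<le> q\<close> k show False by linarith
  qed
  have "GG dfun q = dfun (Some (B (k - 1)))"
  proof (rule GG_eq[where f="\<lambda>x. x"])
    show "mono (\<lambda>x::nat. x)" by (auto simp: mono_def)
    show "rho (Some (B (k - 1))) \<le> q"
      using k k1 B_props[of "k-1"] by (simp add: rho_def lift_T_def)
    fix t assume "rho t \<le> q"
    then show "dfun t \<le> dfun (Some (B (k - 1)))"
      using db2 k1 B_props by (simp add: dfun_def lift_T_def)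
  next
    fix t show "dfun t \<le> rho t"
      using db[of t] less_exp[of "dfun t"] by linarith
  qed
  then have "GG dfun q = k" using k1 B_props[of "k-1"] by (simp add: dfun_def lift_T_def)
  moreover have "\<lfloor>log 2 (real q + 1)\<rfloor> = int k"
    using floor_log_nat_eq_if[of 2 k "q+1"] k by (simp add: add.commute)
  ultimately show "int (GG dfun q) = \<lfloor>log 2 (real q + 1)\<rfloor>" by simp
qed

end
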